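(* Let $G$ be a non-complete double-critical $k$-chromatic graph and $x\in V(G)$. Then $\alpha_x\ge 2$, and $$\deg_G(x)-\alpha_x\ \ge\ |B(xy)|+1\ \ge\ k-1,$$ where $y\in N(x)$ is any vertex contained in an independent set of $G_x$ of size $\alpha_x$.
   Context: All graphs are finite and simple. A graph $G$ is (vertex-)critical if $\chi(G-v)<\chi(G)$ for every vertex $v\in V(G)$. A critical graph $G$ is double-critical if $\chi(G-x-y)\le\chi(G)-2$ for every edge $xy\in E(G)$. For a vertex $x$, $G_x:=G[N(x)]$ is the subgraph induced by the neighbourhood of $x$ and $\alpha_x:=\alpha(G_x)$ its independence number. For an edge $xy$, $B(xy):=N(x)\cap N(y)$ is the common neighbourhood of $x$ and $y$. *)

theory Defs
  imports Main
begin

definition sgraph :: "'a set \<Rightarrow> 'a set set \<Rightarrow> bool" where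
  "sgraph V E \<longleftrightarrow> finite V \<and> (\<forall>e\<in>E. \<exists>u v. e = {u, v} \<and> u \<noteq> v \<and> u \<in> V \<and> v \<in> V)"

definition adj :: "'a set set \<Rightarrow> 'a \<Rightarrow> 'a \<Rightarrow> bool" where
  "adj E u v \<longleftrightarrow> {u, v} \<in> E"

definition colouring :: "'a set \<Rightarrow> 'a set set \<Rightarrow> nat \<Rightarrow> ('a \<Rightarrow> nat) \<Rightarrow> bool" where
  "colouring V E k f \<longleftrightarrow> (\<forall>v\<in>V. f v < k) \<and> (\<forall>u\<in>V. \<forall>v\<in>V. adj E u v \<longrightarrow> f u \<noteq> f v)"

definition chromatic_number :: "'a set \<Rightarrow> 'a set set \<Rightarrow> nat" where
  "chromatic_number V E = (LEAST k. \<exists>f. colouring V E k f)"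

definition del_verts_E :: "'a set set \<Rightarrow> 'a set \<Rightarrow> 'a set set" where
  "del_verts_E E S = {e \<in> E. e \<inter> S = {}}"

definition vertex_critical :: "'a set \<Rightarrow> 'a set set \<Rightarrow> bool" where
  "vertex_critical V E \<longleftrightarrow>
     (\<forall>v\<in>V. chromatic_number (V - {v}) (del_verts_E E {v}) < chromatic_number V E)"

definition double_critical :: "'a set \<Rightarrow> 'a set set \<Rightarrow> bool" where
  "double_critical V E \<longleftrightarrow> vertex_critical V E \<and>
     (\<forall>x\<in>V. \<forall>y\<in>V. adj E x y \<longrightarrow>
        chromatic_number (V - {x, y}) (del_verts_E E {x, y}) \<le> chromatic_number V E - 2)"

definition complete_graph :: "'a set \<Rightarrow> 'a set set \<Rightarrow> bool" where
  "complete_graph V E \<longleftrightarrow> (\<forall>u\<in>V. \<forall>v\<in>V. u \<noteq> v \<longrightarrow> adj E u v)"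

definition nbhd :: "'a set \<Rightarrow> 'a set set \<Rightarrow> 'a \<Rightarrow> 'a set" where
  "nbhd V E x = {v \<in> V. adj E x v}"

definition degree :: "'a set \<Rightarrow> 'a set set \<Rightarrow> 'a \<Rightarrow> nat" where
  "degree V E x = card (nbhd V E x)"

definition independent :: "'a set set \<Rightarrow> 'a set \<Rightarrow> bool" where
  "independent E S \<longleftrightarrow> (\<forall>u\<in>S. \<forall>v\<in>S. \<not> adj E u v)"

text \<open>Independence number of G_x = G[N(x)] (independent sets of G_x are exactly
  the independent sets of G contained in N(x)).\<close>
definition alpha_nbhd :: "'a set \<Rightarrow> 'a set set \<Rightarrow> 'a \<Rightarrow> nat" where
  "alpha_nbhd V E x = Max {card S | S. S \<subseteq> nbhd V E x \<and> independent E S}"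

definition common_nbhd :: "'a set \<Rightarrow> 'a set set \<Rightarrow> 'a \<Rightarrow> 'a \<Rightarrow> 'a set" where
  "common_nbhd V E x y = nbhd V E x \<inter> nbhd V E y"

end

theory Submission
  imports Defs
begin

lemma adj_sym: "adj E u v = adj E v u"
  by (simp add: adj_def insert_commute)

lemma sg_adj: "sgraph V E \<Longrightarrow> adj E u v \<Longrightarrow> u \<noteq> v \<and> u \<in> V \<and> v \<in> V"
  unfolding sgraph_def adj_def
  by (metis doubleton_eq_iff insertI1 insert_absorb2 singleton_insert_inj_eq)

lemma adj_del: "adj (del_verts_E E S) u v \<longleftrightarrow> adj E u v \<and> u \<notin> S \<and> v \<notin> S"
  by (auto simp: adj_def del_verts_E_def)

lemma col_mono: "colouring V E m f \<Longrightarrow> m \<le> n \<Longrightarrow> colouring V E n f"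
  by (auto simp: colouring_def)

lemma chi_le: "colouring V E m f \<Longrightarrow> chromatic_number V E \<le> m"
  unfolding chromatic_number_def by (rule Least_le) blast

lemma chi_ex:
  assumes "finite V" "\<And>u v. adj E u v \<Longrightarrow> u \<noteq> v"
  shows "\<exists>f. colouring V E (chromatic_number V E) f"
proof -
  obtain h where h: "bij_betw h V {0..<card V}" using ex_bij_betw_finite_nat[OF assms(1)] by blast
  have "colouring V E (card V) h"
    using h assms(2) unfolding colouring_def bij_betw_def inj_on_def by auto
  then have "\<exists>k f. colouring V E k f" by blast
  then show ?thesis unfolding chromatic_number_def by (rule LeastI_ex)
qed

lemma sub_col:
  assumes "sgraph V E" "chromatic_number (V - S) (del_verts_E E S) \<le> m"
  shows "\<exists>f. colouring (V - S) (del_verts_E E S) m f"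
proof -
  have "finite (V - S)" using assms(1) by (auto simp: sgraph_def)
  moreover have "\<And>u v. adj (del_verts_E E S) u v \<Longrightarrow> u \<noteq> v"
    using sg_adj[OF assms(1)] by (auto simp: adj_del)
  ultimately obtain f where "colouring (V - S) (del_verts_E E S) (chromatic_number (V - S) (del_verts_E E S)) f"
    using chi_ex by blast
  then show ?thesis using col_mono assms(2) by blast
qed

lemma clique_card:
  assumes "colouring V E m f" "K \<subseteq> V" "\<And>u v. u \<in> K \<Longrightarrow> v \<in> K \<Longrightarrow> u \<noteq> v \<Longrightarrow> adj E u v"
    "finite K"
  shows "card K \<le> m"
proof -
  have "inj_on f K" using assms unfolding inj_on_def colouring_def by blast
  moreover have "f ` K \<subseteq> {..<m}" using assms unfolding colouring_def by auto
  ultimately show ?thesis by (metis card_image card_lessThan card_mono finite_lessThan)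
qed

lemma key:
  assumes sg: "sgraph V E" and chi: "chromatic_number V E = k"
    and xV: "x \<in> V" and yV: "y \<in> V" and xy: "adj E x y"
    and col: "colouring (V - {x, y}) (del_verts_E E {x, y}) (k - 2) \<phi>"
    and c: "c < k - 2"
  shows "\<exists>b\<in>common_nbhd V E x y. \<phi> b = c"
proof (rule ccontr)
  assume "\<not> ?thesis"
  then have nb: "\<And>b. b \<in> V \<Longrightarrow> adj E x b \<Longrightarrow> adj E y b \<Longrightarrow> \<phi> b \<noteq> c"
    by (auto simp: common_nbhd_def nbhd_def)
  have xny: "x \<noteq> y" using sg_adj[OF sg xy] by simp
  have phr: "\<And>w. w \<in> V \<Longrightarrow> w \<noteq> x \<Longrightarrow> w \<noteq> y \<Longrightarrow> \<phi> w < k - 2"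
    using col by (auto simp: colouring_def)
  have php: "\<And>u v. u \<in> V \<Longrightarrow> v \<in> V \<Longrightarrow> u \<notin> {x,y} \<Longrightarrow> v \<notin> {x,y} \<Longrightarrow> adj E u v \<Longrightarrow> \<phi> u \<noteq> \<phi> v"
    using col by (auto simp: colouring_def adj_del)
  define \<psi> where "\<psi> v = (if v = x then k-2 else if v = y then c else if \<phi> v = c \<and> adj E y v then k-2 else \<phi> v)" for v
  have "colouring V E (k-1) \<psi>"
    unfolding colouring_def
  proof safe
    fix v assume "v \<in> V" then show "\<psi> v < k - 1" using phr[of v] c by (auto simp: \<psi>_def)
  next
    fix u v assume uV: "u \<in> V" and vV: "v \<in> V" and uv: "adj E u v" and eq: "\<psi> u = \<psi> v"
    have vu: "adj E v u" using uv adj_sym by metis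
    have une: "u \<noteq> v" using sg_adj[OF sg uv] by simp
    have yx: "adj E y x" using xy adj_sym by metis
    show False
    proof (cases "u = x")
      case True
      then have "v \<noteq> x" using une by simp
      show ?thesis
      proof (cases "v = y")
        case True then show ?thesis using eq \<open>u = x\<close> c xny by (simp add: \<psi>_def)
      next
        case False
        then have "\<psi> v = (if \<phi> v = c \<and> adj E y v then k-2 else \<phi> v)"
          using \<open>v \<noteq> x\<close> by (simp add: \<psi>_def)
        then show ?thesis using eq \<open>u = x\<close> nb[OF vV] uv phr[OF vV \<open>v \<noteq> x\<close> False]
          by (simp add: \<psi>_def split: if_splits)
      qed
    next
      case ux: False
      show ?thesis
      proof (cases "u = y")
        case True
        then have "v \<noteq> y" using une by simp
        show ?thesis
        proof (cases "v = x")
          case True then show ?thesis using eq \<open>u = y\<close> c xny by (simp add: \<psi>_def)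
        next
          case False
          then have "\<psi> v = (if \<phi> v = c \<and> adj E y v then k-2 else \<phi> v)"
            using \<open>v \<noteq> y\<close> by (simp add: \<psi>_def)
          then show ?thesis using eq \<open>u = y\<close> uv c xny
            by (simp add: \<psi>_def split: if_splits)
        qed
      next
        case uy: False
        have pu: "\<psi> u = (if \<phi> u = c \<and> adj E y u then k-2 else \<phi> u)"
          using ux uy by (simp add: \<psi>_def)
        have phu: "\<phi> u < k - 2" using phr[OF uV ux uy] .
        show ?thesis
        proof (cases "v = x")
          case True
          then show ?thesis using eq pu vu nb[OF uV] phu by (simp add: \<psi>_def split: if_splits)
        next
          case vx: False
          show ?thesis
          proof (cases "v = y")
            case True
            then show ?thesis using eq pu vu c xny by (simp add: \<psi>_def split: if_splits)
          next
            case vy: False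
            have pv: "\<psi> v = (if \<phi> v = c \<and> adj E y v then k-2 else \<phi> v)"
              using vx vy by (simp add: \<psi>_def)
            have phv: "\<phi> v < k - 2" using phr[OF vV vx vy] .
            have "\<phi> u \<noteq> \<phi> v" using php[OF uV vV] ux uy vx vy uv by simp
            then show ?thesis using eq pu pv phu phv by (simp split: if_splits)
          qed
        qed
      qed
    qed
  qed
  then have "k \<le> k - 1" using chi_le chi by metis
  then show False using c by arith
qed

lemma key_card:
  assumes sg: "sgraph V E" and chi: "chromatic_number V E = k"
    and xV: "x \<in> V" and yV: "y \<in> V" and xy: "adj E x y"
    and col: "colouring (V - {x, y}) (del_verts_E E {x, y}) (k - 2) \<phi>"
  shows "k - 2 \<le> card (common_nbhd V E x y)"
proof -
  have fin: "finite (common_nbhd V E x y)" using sg by (auto simp: sgraph_def common_nbhd_def nbhd_def)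
  have "{..<k-2} \<subseteq> \<phi> ` common_nbhd V E x y" using key[OF assms] by blast
  then have "card {..<k-2} \<le> card (\<phi> ` common_nbhd V E x y)" using fin card_mono by blast
  also have "\<dots> \<le> card (common_nbhd V E x y)" using fin card_image_le by blast
  finally show ?thesis by simp
qed

theorem proposition12:
  fixes V :: "'a set" and E :: "'a set set" and k :: nat and x :: 'a
  assumes "sgraph V E"
    and "double_critical V E"
    and "\<not> complete_graph V E"
    and "chromatic_number V E = k"
    and "x \<in> V"
  shows "alpha_nbhd V E x \<ge> 2 \<and>
    (\<forall>y \<in> nbhd V E x.
       (\<exists>S. S \<subseteq> nbhd V E x \<and> independent E S \<and> card S = alpha_nbhd V E x \<and> y \<in> S) \<longrightarrow>
       int (degree V E x) - int (alpha_nbhd V E x) \<ge> int (card (common_nbhd V E x y)) + 1 \<and>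
       int (card (common_nbhd V E x y)) + 1 \<ge> int k - 1)"
proof -
  note sg = assms(1) and chi = assms(4) and xV = assms(5)
  have finV: "finite V" using sg by (simp add: sgraph_def)
  define N where "N = nbhd V E x"
  have finN: "finite N" using finV by (simp add: N_def nbhd_def)
  have NV: "N \<subseteq> V" by (auto simp: N_def nbhd_def)
  have vc: "vertex_critical V E" and dc: "\<And>a b. a \<in> V \<Longrightarrow> b \<in> V \<Longrightarrow> adj E a b \<Longrightarrow>
        chromatic_number (V - {a, b}) (del_verts_E E {a, b}) \<le> k - 2"
    using assms(2) chi by (auto simp: double_critical_def)
  have noloop: "\<And>u v. adj E u v \<Longrightarrow> u \<noteq> v" using sg_adj[OF sg] by blast
  obtain f0 where "colouring V E k f0" using chi_ex[OF finV noloop] chi by blast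
  then have k1: "k \<ge> 1" using xV by (auto simp: colouring_def)
  have deg: "k - 1 \<le> card N"
  proof (rule ccontr)
    assume lt: "\<not> k - 1 \<le> card N"
    have "chromatic_number (V - {x}) (del_verts_E E {x}) \<le> k - 1"
      using vc xV chi by (auto simp: vertex_critical_def)
    then obtain \<psi> where psi: "colouring (V - {x}) (del_verts_E E {x}) (k-1) \<psi>"
      using sub_col[OF sg] by blast
    have "card (\<psi> ` N) < k - 1" using lt card_image_le[OF finN, of \<psi>] by linarith
    then have "\<not> {..<k-1} \<subseteq> \<psi> ` N"
      by (metis card_lessThan card_mono finite_imageI finN not_le)
    then obtain c where c: "c < k - 1" "c \<notin> \<psi> ` N" by blast
    define g where "g v = (if v = x then c else \<psi> v)" for v
    have "colouring V E (k-1) g"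
      unfolding colouring_def
    proof safe
      fix v assume "v \<in> V" then show "g v < k - 1" using psi c by (auto simp: g_def colouring_def)
    next
      fix u v assume uV: "u \<in> V" and vV: "v \<in> V" and uv: "adj E u v" and eq: "g u = g v"
      have une: "u \<noteq> v" using noloop uv by blast
      show False
      proof (cases "u = x \<or> v = x")
        case True
        then show ?thesis using eq une uv adj_sym[of E u v] c uV vV
          by (auto simp: g_def N_def nbhd_def)
      next
        case False
        then show ?thesis using eq uv psi uV vV by (auto simp: g_def colouring_def adj_del)
      qed
    qed
    then have "k \<le> k - 1" using chi_le chi by metis
    then show False using k1 by arith
  qed
  have finA: "finite {card S | S. S \<subseteq> N \<and> independent E S}"
  proof -
    have "{card S | S. S \<subseteq> N \<and> independent E S} \<subseteq> card ` Pow N" by auto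
    then show ?thesis using finN finite_subset by blast
  qed
  have alpha2: "alpha_nbhd V E x \<ge> 2"
  proof (cases "\<exists>u\<in>N. \<exists>w\<in>N. u \<noteq> w \<and> \<not> adj E u w")
    case True
    then obtain u w where uw: "u \<in> N" "w \<in> N" "u \<noteq> w" "\<not> adj E u w" by blast
    have "independent E {u, w}" using uw noloop adj_sym[of E u w] by (auto simp: independent_def)
    then have "card {u,w} \<in> {card S | S. S \<subseteq> N \<and> independent E S}" using uw by blast
    then have "card {u,w} \<le> alpha_nbhd V E x" using finA by (simp add: alpha_nbhd_def N_def)
    then show ?thesis using uw by simp
  next
    case False
    then have cl: "\<And>u w. u \<in> N \<Longrightarrow> w \<in> N \<Longrightarrow> u \<noteq> w \<Longrightarrow> adj E u w" by blast
    define K where "K = insert x N"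
    obtain a b where ab: "a \<in> V" "b \<in> V" "a \<noteq> b" "\<not> adj E a b"
      using assms(3) by (auto simp: complete_graph_def)
    have Kcl: "\<And>u w. u \<in> K \<Longrightarrow> w \<in> K \<Longrightarrow> u \<noteq> w \<Longrightarrow> adj E u w"
    proof -
      fix u w assume u: "u \<in> K" and w: "w \<in> K" and uw: "u \<noteq> w"
      show "adj E u w"
      proof (cases "u = x")
        case True then show ?thesis using w uw by (simp add: K_def N_def nbhd_def)
      next
        case False
        then have uN: "u \<in> N" using u by (simp add: K_def)
        show ?thesis
        proof (cases "w = x")
          case True then show ?thesis using uN adj_sym[of E u x] by (simp add: N_def nbhd_def)
        next
          case False then show ?thesis using uN w uw cl by (simp add: K_def)
        qed
      qed
    qed
    obtain v where v: "v \<in> V" "v \<notin> K" using ab Kcl by blast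
    have "chromatic_number (V - {v}) (del_verts_E E {v}) \<le> k - 1"
      using vc v chi by (auto simp: vertex_critical_def)
    then obtain \<psi> where psi: "colouring (V - {v}) (del_verts_E E {v}) (k-1) \<psi>"
      using sub_col[OF sg] by blast
    have "card K \<le> k - 1"
      apply (rule clique_card[OF psi])
      using v NV xV Kcl finN by (auto simp: K_def adj_del)
    moreover have "card K = card N + 1"
    proof -
      have "x \<notin> N" using noloop by (auto simp: N_def nbhd_def)
      then show ?thesis unfolding K_def using finN by simp
    qed
    ultimately show ?thesis using deg k1 by arith
  qed
  have part2: "int (degree V E x) - int (alpha_nbhd V E x) \<ge> int (card (common_nbhd V E x y)) + 1 \<and>
       int (card (common_nbhd V E x y)) + 1 \<ge> int k - 1"
    if yN: "y \<in> N" and S: "S \<subseteq> N" "independent E S" "card S = alpha_nbhd V E x" "y \<in> S" for y S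
  proof -
    define B where "B = common_nbhd V E x y"
    have xy: "adj E x y" and yV: "y \<in> V" using yN by (auto simp: N_def nbhd_def)
    obtain \<phi> where phi: "colouring (V - {x, y}) (del_verts_E E {x, y}) (k - 2) \<phi>"
      using sub_col[OF sg dc[OF xV yV xy]] by blast
    have Bk: "k - 2 \<le> card B" using key_card[OF sg chi xV yV xy phi] by (simp add: B_def)
    have finB: "finite B" using finN by (auto simp: B_def common_nbhd_def N_def)
    have finS: "finite S" using S finN finite_subset by blast
    have BN: "B \<subseteq> N" by (auto simp: B_def common_nbhd_def N_def)
    have SB: "S \<inter> B = {}" using S by (auto simp: B_def common_nbhd_def nbhd_def independent_def)
    have "\<exists>w\<in>N. w \<notin> S \<and> w \<notin> B"
    proof (rule ccontr)
      assume "\<not> ?thesis"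
      then have NSB: "N \<subseteq> S \<union> B" by blast
      have "card S \<ge> 2" using S alpha2 by simp
      then obtain z where z: "z \<in> S" "z \<noteq> y"
        by (metis card_le_Suc0_iff_eq finS not_less_eq_eq numeral_2_eq_2 S(4))
      have zV: "z \<in> V" and xz: "adj E x z" using z S by (auto simp: N_def nbhd_def)
      obtain \<phi>' where phi': "colouring (V - {x, z}) (del_verts_E E {x, z}) (k - 2) \<phi>'"
        using sub_col[OF sg dc[OF xV zV xz]] by blast
      have yx: "y \<noteq> x" using noloop xy by blast
      have c: "\<phi>' y < k - 2" using phi' yV yx z by (auto simp: colouring_def)
      obtain b where b: "b \<in> common_nbhd V E x z" "\<phi>' b = \<phi>' y"
        using key[OF sg chi xV zV xz phi' c] by blast
      have bN: "b \<in> N" and zb: "adj E z b" and bV: "b \<in> V" using b by (auto simp: common_nbhd_def nbhd_def N_def)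
      have "b \<notin> S" using zb z S(2) by (auto simp: independent_def)
      then have "b \<in> B" using NSB bN by blast
      then have yb: "adj E y b" by (auto simp: B_def common_nbhd_def nbhd_def)
      have "b \<noteq> x" "b \<noteq> z" using b noloop by (auto simp: common_nbhd_def nbhd_def)
      moreover have "y \<noteq> b" using noloop yb by blast
      ultimately have a1: "adj (del_verts_E E {x,z}) y b" and m1: "y \<in> V - {x,z}" and m2: "b \<in> V - {x,z}"
        using yb yx z yV bV by (auto simp: adj_del)
      have "\<phi>' y \<noteq> \<phi>' b" using phi' a1 m1 m2 unfolding colouring_def by blast
      then show False using b by simp
    qed
    then obtain w where w: "w \<in> N" "w \<notin> S" "w \<notin> B" by blast
    have "card (insert w (S \<union> B)) \<le> card N"
      using w S BN finN by (intro card_mono) auto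
    moreover have "card (insert w (S \<union> B)) = card S + card B + 1"
      using w SB finS finB by (simp add: card_Un_disjoint)
    ultimately show ?thesis using Bk S(3)
      by (simp add: degree_def N_def B_def)
  qed
  show ?thesis using alpha2 part2 by (auto simp: N_def)
qed

end
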